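(* Let $X$ be a Banach space, $F$ a Banach lattice and $T: X \to F$ a bounded linear operator. The following are equivalent: (1) $T$ is an almost Grothendieck operator; (2) $S \circ T: X \to c_0$ is weakly compact for every disjoint operator $S: F \to c_0$; (3) $T(A)$ is an almost Grothendieck set in $F$ for every bounded set $A \subset X$; (4) $T(B_X)$ is an almost Grothendieck set in $F$.
   Context: $B_X$ is the closed unit ball of $X$. Every bounded linear operator $S: F \to c_0$ has the form $S(y) = (y_n'(y))_n$ for a unique weak* null sequence $(y_n') \subset F'$; $S$ is a disjoint operator if $(y_n')$ is disjoint in the dual Banach lattice $F'$. A subset $A \subset F$ is almost Grothendieck if $S(A)$ is relatively weakly compact in $c_0$ for every disjoint operator $S: F \to c_0$. A bounded operator $T: X \to F$ is almost Grothendieck if $T'y_n' \to 0$ weakly in $X'$ for every disjoint weak* null sequence $(y_n') \subset F'$. *)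

theory Defs
  imports "HOL-Analysis.Analysis"
begin

class banach_lattice = banach + lattice +
  assumes bl_add_mono: "x \<le> y \<Longrightarrow> x + z \<le> y + z"
    and bl_scale_mono: "x \<le> y \<Longrightarrow> 0 \<le> a \<Longrightarrow> a *\<^sub>R x \<le> a *\<^sub>R y"
    and bl_norm_mono: "sup x (- x) \<le> sup y (- y) \<Longrightarrow> norm x \<le> norm y"

definition labs :: "'b::banach_lattice \<Rightarrow> 'b" where
  "labs x = sup x (- x)"

text \<open>Modulus of a functional f in F' evaluated at a positive element u
(Riesz--Kantorovich): |f|(u) = sup { |f z| : |z| <= u }.\<close>
definition dual_abs :: "('b::banach_lattice \<Rightarrow>\<^sub>L real) \<Rightarrow> 'b \<Rightarrow> real" where
  "dual_abs f u = Sup {\<bar>blinfun_apply f z\<bar> | z. labs z \<le> u}"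

text \<open>f, g in F' are disjoint iff |f| inf |g| = 0, where (Riesz--Kantorovich)
(|f| inf |g|)(y) = inf { |f|(u) + |g|(y - u) : 0 <= u <= y } for y >= 0.\<close>
definition dual_disjoint :: "('b::banach_lattice \<Rightarrow>\<^sub>L real) \<Rightarrow> ('b \<Rightarrow>\<^sub>L real) \<Rightarrow> bool" where
  "dual_disjoint f g \<longleftrightarrow>
     (\<forall>y. 0 \<le> y \<longrightarrow> Inf {dual_abs f u + dual_abs g (y - u) | u. 0 \<le> u \<and> u \<le> y} = 0)"

definition disjoint_seq :: "(nat \<Rightarrow> ('b::banach_lattice \<Rightarrow>\<^sub>L real)) \<Rightarrow> bool" where
  "disjoint_seq ys \<longleftrightarrow> (\<forall>n m. n \<noteq> m \<longrightarrow> dual_disjoint (ys n) (ys m))"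

definition weak_star_null :: "(nat \<Rightarrow> ('b::real_normed_vector \<Rightarrow>\<^sub>L real)) \<Rightarrow> bool" where
  "weak_star_null ys \<longleftrightarrow> (\<forall>v. (\<lambda>n. blinfun_apply (ys n) v) \<longlonglongrightarrow> 0)"

definition weakly_null_dual :: "(nat \<Rightarrow> ('a::real_normed_vector \<Rightarrow>\<^sub>L real)) \<Rightarrow> bool" where
  "weakly_null_dual xs \<longleftrightarrow>
     (\<forall>\<phi> :: ('a \<Rightarrow>\<^sub>L real) \<Rightarrow>\<^sub>L real. (\<lambda>n. blinfun_apply \<phi> (xs n)) \<longlonglongrightarrow> 0)"

text \<open>c_0 as the closed subspace of l^infinity = (nat \<Rightarrow>C real) (sup norm) of null sequences.\<close>
definition c0 :: "(nat \<Rightarrow>\<^sub>C real) set" where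
  "c0 = {g. (\<lambda>n. apply_bcontfun g n) \<longlonglongrightarrow> 0}"

definition dual_on :: "'v::real_normed_vector set \<Rightarrow> ('v \<Rightarrow> real) set" where
  "dual_on M = {f. (\<forall>x\<in>M. \<forall>y\<in>M. f (x + y) = f x + f y)
                  \<and> (\<forall>x\<in>M. \<forall>c. f (c *\<^sub>R x) = c * f x)
                  \<and> (\<exists>C. \<forall>x\<in>M. \<bar>f x\<bar> \<le> C * norm x)}"

definition weak_topology_on :: "'v::real_normed_vector set \<Rightarrow> 'v topology" where
  "weak_topology_on M =
     topology_generated_by {{x \<in> M. f x \<in> U} | f U. f \<in> dual_on M \<and> open U}"

definition rel_weakly_compact :: "'v::real_normed_vector set \<Rightarrow> 'v set \<Rightarrow> bool" where
  "rel_weakly_compact M A \<longleftrightarrow>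
     compactin (weak_topology_on M) ((weak_topology_on M) closure_of A)"

text \<open>The operator S : F -> c_0, S(y) = (y_n'(y))_n, given by a weak* null sequence.\<close>
definition seq_op :: "(nat \<Rightarrow> ('b::real_normed_vector \<Rightarrow>\<^sub>L real)) \<Rightarrow> 'b \<Rightarrow> (nat \<Rightarrow>\<^sub>C real)" where
  "seq_op ys v = Bcontfun (\<lambda>n. blinfun_apply (ys n) v)"

text \<open>S is a disjoint operator iff its weak* null sequence is disjoint in F'.\<close>
definition disjoint_operator_seq :: "(nat \<Rightarrow> ('b::banach_lattice \<Rightarrow>\<^sub>L real)) \<Rightarrow> bool" where
  "disjoint_operator_seq ys \<longleftrightarrow> weak_star_null ys \<and> disjoint_seq ys"

definition almost_grothendieck_set :: "'b::banach_lattice set \<Rightarrow> bool" where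
  "almost_grothendieck_set A \<longleftrightarrow>
     (\<forall>ys. disjoint_operator_seq ys \<longrightarrow> rel_weakly_compact c0 (seq_op ys ` A))"

definition almost_grothendieck_op :: "('a::banach \<Rightarrow>\<^sub>L 'b::banach_lattice) \<Rightarrow> bool" where
  "almost_grothendieck_op T \<longleftrightarrow>
     (\<forall>ys. weak_star_null ys \<and> disjoint_seq ys \<longrightarrow> weakly_null_dual (\<lambda>n. ys n o\<^sub>L T))"

definition weakly_compact_op_c0 :: "('a::real_normed_vector \<Rightarrow> (nat \<Rightarrow>\<^sub>C real)) \<Rightarrow> bool" where
  "weakly_compact_op_c0 R \<longleftrightarrow> rel_weakly_compact c0 (R ` cball 0 1)"

end

theory Submission
  imports Defs
begin

lemma seq_bcontfun:
  fixes f :: "nat \<Rightarrow> real"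
  assumes "f \<longlonglongrightarrow> 0"
  shows "f \<in> bcontfun"
proof -
  have "Bseq f" using assms by (intro convergent_imp_Bseq convergentI)
  then obtain K where "\<And>n. norm (f n) \<le> K" by (auto simp: Bseq_def)
  then show ?thesis
    by (intro bcontfun_normI) (auto intro: continuous_on_discrete)
qed

lemma apply_Bcontfun_seq:
  fixes f :: "nat \<Rightarrow> real"
  assumes "f \<longlonglongrightarrow> 0"
  shows "apply_bcontfun (Bcontfun f) = f"
  using seq_bcontfun[OF assms] by (simp add: Bcontfun_inverse)

lemma mem_c0: "g \<in> c0 \<longleftrightarrow> (\<lambda>n. apply_bcontfun g n) \<longlonglongrightarrow> 0"
  by (simp add: c0_def)

lemma c0_add: "x \<in> c0 \<Longrightarrow> y \<in> c0 \<Longrightarrow> x + y \<in> c0"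
  by (auto simp: mem_c0 intro: tendsto_add_zero)

lemma c0_diff: "x \<in> c0 \<Longrightarrow> y \<in> c0 \<Longrightarrow> x - y \<in> c0"
  by (auto simp: mem_c0 dest: tendsto_diff)

lemma c0_scale: "x \<in> c0 \<Longrightarrow> c *\<^sub>R x \<in> c0"
  by (auto simp: mem_c0 dest: tendsto_mult_right_zero)

lemma c0_zero: "0 \<in> c0"
  by (simp add: mem_c0)

lemma topspace_W: "topspace (weak_topology_on c0) = c0"
proof -
  have "(\<lambda>_. 0) \<in> dual_on c0" by (auto simp: dual_on_def intro!: exI[of _ 0])
  then have "c0 \<in> {{x \<in> c0. f x \<in> U} | f U. f \<in> dual_on c0 \<and> open U}"
    by (intro CollectI exI[of _ "\<lambda>_. 0"] exI[of _ UNIV]) auto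
  then show ?thesis
    unfolding weak_topology_on_def topology_generated_by_topspace by blast
qed

lemma openin_W:
  assumes "f \<in> dual_on c0" "open U"
  shows "openin (weak_topology_on c0) {x \<in> c0. f x \<in> U}"
  unfolding weak_topology_on_def
  by (rule topology_generated_by_Basis) (use assms in blast)

lemma coord_dual: "(\<lambda>g. apply_bcontfun g n) \<in> dual_on c0"
proof -
  have "\<bar>apply_bcontfun x n\<bar> \<le> 1 * norm x" for x :: "nat \<Rightarrow>\<^sub>C real"
    using norm_bounded[of x n] by simp
  then show ?thesis
    unfolding dual_on_def by (auto intro!: exI[of _ 1])
qed

lemma Hausdorff_W: "Hausdorff_space (weak_topology_on c0)"
  unfolding Hausdorff_space_def topspace_W
proof (intro allI impI, elim conjE)
  fix x y :: "nat \<Rightarrow>\<^sub>C real"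
  assume xy: "x \<in> c0" "y \<in> c0" "x \<noteq> y"
  then obtain n where n: "apply_bcontfun x n \<noteq> apply_bcontfun y n"
    by (meson bcontfun_eqI)
  define d where "d = \<bar>apply_bcontfun x n - apply_bcontfun y n\<bar> / 2"
  have d: "d > 0" using n by (simp add: d_def)
  let ?U = "{g \<in> c0. apply_bcontfun g n \<in> ball (apply_bcontfun x n) d}"
  let ?V = "{g \<in> c0. apply_bcontfun g n \<in> ball (apply_bcontfun y n) d}"
  have "disjnt ?U ?V"
    unfolding disjnt_def by (auto simp: dist_real_def d_def) (smt (verit))
  moreover have "openin (weak_topology_on c0) ?U" "openin (weak_topology_on c0) ?V"
    by (rule openin_W[OF coord_dual], simp)+
  ultimately show "\<exists>U V. openin (weak_topology_on c0) U \<and> openin (weak_topology_on c0) V \<and> x \<in> U \<and> y \<in> V \<and> disjnt U V"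
    using xy d by (intro exI[of _ ?U] exI[of _ ?V]) auto
qed

definition trc :: "nat \<Rightarrow> (nat \<Rightarrow> real) \<Rightarrow> (nat \<Rightarrow>\<^sub>C real)" where
  "trc m w = Bcontfun (\<lambda>k. if k < m then w k else 0)"

definition ev :: "nat \<Rightarrow> (nat \<Rightarrow>\<^sub>C real)" where
  "ev n = Bcontfun (\<lambda>k. if k = n then 1 else 0)"

lemma trc_apply: "apply_bcontfun (trc m w) = (\<lambda>k. if k < m then w k else 0)"
proof -
  have "(\<lambda>k. if k < m then w k else 0) \<longlonglongrightarrow> 0"
    by (rule tendsto_eventually) (auto simp: eventually_sequentially intro!: exI[of _ m])
  then show ?thesis unfolding trc_def by (rule apply_Bcontfun_seq)
qed

lemma ev_apply: "apply_bcontfun (ev n) = (\<lambda>k. if k = n then 1 else 0)"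
proof -
  have "(\<lambda>k. if k = n then 1 else 0::real) \<longlonglongrightarrow> 0"
    by (rule tendsto_eventually) (auto simp: eventually_sequentially intro!: exI[of _ "Suc n"])
  then show ?thesis unfolding ev_def by (rule apply_Bcontfun_seq)
qed

lemma trc_c0: "trc m w \<in> c0"
  unfolding mem_c0 trc_apply
  by (rule tendsto_eventually) (auto simp: eventually_sequentially intro!: exI[of _ m])

lemma ev_c0: "ev n \<in> c0"
  unfolding mem_c0 ev_apply
  by (rule tendsto_eventually) (auto simp: eventually_sequentially intro!: exI[of _ "Suc n"])

lemma dual_onD:
  assumes "f \<in> dual_on c0"
  shows "\<And>x y. x \<in> c0 \<Longrightarrow> y \<in> c0 \<Longrightarrow> f (x + y) = f x + f y"
    and "\<And>x c. x \<in> c0 \<Longrightarrow> f (c *\<^sub>R x) = c * f x"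
  using assms by (auto simp: dual_on_def)

lemma dual_on_diff:
  assumes "f \<in> dual_on c0" "x \<in> c0" "y \<in> c0"
  shows "f (x - y) = f x - f y"
proof -
  have "f x = f ((x - y) + y)" by simp
  also have "\<dots> = f (x - y) + f y" using dual_onD(1)[OF assms(1) c0_diff[OF assms(2,3)] assms(3)] .
  finally show ?thesis by simp
qed

lemma dual_on_trc:
  assumes "f \<in> dual_on c0"
  shows "f (trc m w) = (\<Sum>n<m. w n * f (ev n))"
proof (induction m)
  case 0
  have "trc 0 w = 0" by (rule bcontfun_eqI) (simp add: trc_apply)
  moreover have "f 0 = 2 * f 0" using dual_onD(2)[OF assms c0_zero, of 2] by simp
  ultimately show ?case by simp
next
  case (Suc m)
  have "trc (Suc m) w = trc m w + w m *\<^sub>R ev m"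
    by (rule bcontfun_eqI) (auto simp: trc_apply ev_apply less_Suc_eq)
  then have "f (trc (Suc m) w) = f (trc m w) + w m * f (ev m)"
    using dual_onD[OF assms] trc_c0 ev_c0 c0_scale by simp
  then show ?case using Suc by simp
qed

lemma norm_trc_le:
  assumes "\<And>k. \<bar>w k\<bar> \<le> 1"
  shows "norm (trc m w) \<le> 1"
proof -
  have "dist (trc m w) 0 \<le> 1"
    by (rule dist_bound) (auto simp: trc_apply assms)
  then show ?thesis by (simp add: dist_norm)
qed

lemma dual_on_l1:
  assumes f: "f \<in> dual_on c0"
  shows "summable (\<lambda>n. \<bar>f (ev n)\<bar>)"
    and "\<And>x. x \<in> c0 \<Longrightarrow> (\<lambda>n. f (ev n) * apply_bcontfun x n) sums f x"
proof -
  obtain C where C: "\<And>x. x \<in> c0 \<Longrightarrow> \<bar>f x\<bar> \<le> C * norm x"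
    using f unfolding dual_on_def by blast
  define C' where "C' = max C 0 + 1"
  have C'pos: "C' > 0" by (simp add: C'_def)
  have C': "\<bar>f x\<bar> \<le> C' * norm x" if "x \<in> c0" for x
  proof -
    have "C * norm x \<le> C' * norm x"
      by (intro mult_right_mono) (auto simp: C'_def)
    then show ?thesis using C[OF that] by linarith
  qed
  show "summable (\<lambda>n. \<bar>f (ev n)\<bar>)"
  proof (rule summableI_nonneg_bounded)
    fix m
    have "(\<Sum>n<m. \<bar>f (ev n)\<bar>) = f (trc m (\<lambda>n. sgn (f (ev n))))"
      by (simp add: dual_on_trc[OF f] abs_sgn mult.commute)
    also have "\<dots> \<le> C' * norm (trc m (\<lambda>n. sgn (f (ev n))))"
      using C'[OF trc_c0, of m "\<lambda>n. sgn (f (ev n))"] by linarith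
    also have "\<dots> \<le> C' * 1"
      using C'pos by (intro mult_left_mono norm_trc_le) (auto simp: abs_sgn_eq)
    finally show "(\<Sum>n<m. \<bar>f (ev n)\<bar>) \<le> C'" by simp
  qed simp
  fix x assume x: "x \<in> c0"
  show "(\<lambda>n. f (ev n) * apply_bcontfun x n) sums f x"
    unfolding sums_def
  proof (rule LIMSEQ_I)
    fix r :: real assume r: "r > 0"
    have "(\<lambda>n. apply_bcontfun x n) \<longlonglongrightarrow> 0" using x by (simp add: mem_c0)
    then obtain M where M: "\<And>k. k \<ge> M \<Longrightarrow> \<bar>apply_bcontfun x k\<bar> < r / (2 * C')"
      using LIMSEQ_D[of "\<lambda>n. apply_bcontfun x n" 0 "r / (2 * C')"] r C'pos by auto
    show "\<exists>M. \<forall>m\<ge>M. norm ((\<Sum>n<m. f (ev n) * apply_bcontfun x n) - f x) < r"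
    proof (intro exI allI impI)
      fix m assume m: "m \<ge> M"
      have "dist (x - trc m (apply_bcontfun x)) 0 \<le> r / (2 * C')"
      proof (rule dist_bound)
        fix k
        show "dist (apply_bcontfun (x - trc m (apply_bcontfun x)) k) (apply_bcontfun 0 k) \<le> r / (2 * C')"
          using M[of k] m r C'pos by (auto simp: trc_apply dist_real_def less_imp_le)
      qed
      then have nrm: "norm (x - trc m (apply_bcontfun x)) \<le> r / (2 * C')" by (simp add: dist_norm)
      have "\<bar>f (x - trc m (apply_bcontfun x))\<bar> \<le> C' * (r / (2 * C'))"
        using C'[OF c0_diff[OF x trc_c0]] nrm C'pos
        by (meson mult_left_mono order_trans less_imp_le)
      also have "\<dots> < r" using C'pos r by (simp add: field_simps)
      finally have "\<bar>f x - f (trc m (apply_bcontfun x))\<bar> < r"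
        using dual_on_diff[OF f x trc_c0] by simp
      then show "norm ((\<Sum>n<m. f (ev n) * apply_bcontfun x n) - f x) < r"
        by (simp add: dual_on_trc[OF f] mult.commute abs_minus_commute)
    qed
  qed
qed

lemma unif_bound:
  fixes z :: "nat \<Rightarrow> ('a::banach \<Rightarrow>\<^sub>L real)"
  assumes bd: "\<And>x. \<exists>B. \<forall>n. \<bar>z n x\<bar> \<le> B"
  shows "\<exists>C. \<forall>n. norm (z n) \<le> C"
proof -
  define T where "T k = (\<Inter>n. {x. \<bar>z n x\<bar> \<le> real k})" for k :: nat
  have clT: "closed (T k)" for k
    unfolding T_def by (intro closed_INT ballI closed_Collect_le continuous_intros)
  have unT: "\<Union>(range T) = UNIV"
  proof -
    have "x \<in> \<Union>(range T)" for x
    proof -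
      obtain B where B: "\<forall>n. \<bar>z n x\<bar> \<le> B" using bd by blast
      obtain k :: nat where "B \<le> real k" using real_arch_simple by blast
      then have "x \<in> T k" using B by (auto simp: T_def intro: order_trans)
      then show ?thesis by blast
    qed
    then show ?thesis by blast
  qed
  have "\<exists>k. interior (T k) \<noteq> {}"
  proof (rule ccontr)
    assume "\<nexists>k. interior (T k) \<noteq> {}"
    then have "euclidean interior_of \<Union>(range T) = {}"
      by (intro Baire_category_alt) (auto simp: completely_metrizable_space_euclidean clT)
    then show False using unT by simp
  qed
  then obtain k x0 where "x0 \<in> interior (T k)" by blast
  then obtain \<rho> where \<rho>: "\<rho> > 0" "ball x0 \<rho> \<subseteq> T k"
    by (meson mem_interior)
  have "norm (z n) \<le> 4 * real k / \<rho>" for n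
  proof (rule norm_blinfun_bound)
    show "0 \<le> 4 * real k / \<rho>" using \<rho> by simp
    fix u :: 'a
    show "norm (z n u) \<le> 4 * real k / \<rho> * norm u"
    proof (cases "u = 0")
      case True then show ?thesis by simp
    next
      case False
      define v where "v = (\<rho> / 2 / norm u) *\<^sub>R u"
      have nv: "norm v = \<rho> / 2" using False \<rho> by (simp add: v_def)
      have "x0 + v \<in> T k" "x0 \<in> T k"
        using \<rho> nv by (auto intro!: subsetD[OF \<rho>(2)] simp: dist_norm)
      then have "\<bar>z n (x0 + v)\<bar> \<le> real k" "\<bar>z n x0\<bar> \<le> real k"
        by (auto simp: T_def)
      then have "\<bar>z n v\<bar> \<le> 2 * real k"
        by (simp add: blinfun.add_right)
      moreover have "z n v = (\<rho> / 2 / norm u) * z n u"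
        by (simp add: v_def blinfun.scaleR_right)
      ultimately have "(\<rho> / 2 / norm u) * \<bar>z n u\<bar> \<le> 2 * real k"
        using \<rho> by (simp add: abs_mult)
      then show ?thesis using False \<rho>
        by (simp add: field_simps)
    qed
  qed
  then show ?thesis by blast
qed

lemma aux_div:
  fixes t A B :: real
  assumes "0 < t" "2 * t * A < t^2 * (1 + B)"
  shows "A < t * (1 + B) / 2"
proof -
  have "t * (2 * A) < t * (t * (1 + B))" using assms(2) by (simp add: power2_eq_square mult_ac)
  then have "2 * A < t * (1 + B)" using assms(1) by (simp only: mult_less_cancel_left_pos)
  then show ?thesis by simp
qed

lemma helly:
  fixes g :: "nat \<Rightarrow> ('a::real_normed_vector \<Rightarrow>\<^sub>L real)"
    and \<phi> :: "('a \<Rightarrow>\<^sub>L real) \<Rightarrow> real"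
  assumes lin: "linear \<phi>" and bd: "\<And>h. \<phi> h \<le> norm h" and eps: "\<epsilon> > 0"
  shows "\<exists>x. norm x \<le> 1 \<and> (\<forall>i<N. \<bar>g i x - \<phi> (g i)\<bar> < \<epsilon>)"
proof -
  define c where "c i = \<phi> (g i)" for i
  define d where "d x = (\<Sum>i<N. (g i x - c i)^2)" for x
  define S where "S = d ` cball 0 1"
  define \<delta> where "\<delta> = Inf S"
  define G2 where "G2 = (\<Sum>i<N. (2 * norm (g i))^2)"
  define K where "K = (1 + G2) / 2"
  have Kpos: "K > 0" unfolding K_def G2_def by (simp add: add_pos_nonneg sum_nonneg)
  have Sne: "S \<noteq> {}" unfolding S_def by simp
  have Sbdd: "bdd_below S" unfolding S_def d_def
    by (rule bdd_belowI[of _ 0]) (auto intro: sum_nonneg)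
  have low: "\<delta> \<le> d x" if "norm x \<le> 1" for x
    unfolding \<delta>_def S_def using that Sbdd[unfolded S_def] by (intro cInf_lower) auto
  have key: "\<delta> \<le> t * K" if t: "0 < t" "t \<le> 1" for t
  proof -
    have lt: "Inf S < \<delta> + t^2" using t by (simp add: \<delta>_def)
    obtain x0 where x0: "norm x0 \<le> 1" "d x0 < \<delta> + t^2"
      using cInf_lessD[OF Sne lt] unfolding S_def by auto
    define a where "a i = c i - g i x0" for i
    define h where "h = (\<Sum>i<N. a i *\<^sub>R g i)"
    have h_apply: "h y = (\<Sum>i<N. a i * g i y)" for y
      by (simp add: h_def blinfun.sum_left blinfun.scaleR_left)
    have dx0: "d x0 = (\<Sum>i<N. (a i)^2)"
      unfolding d_def a_def by (intro sum.cong) (auto simp: power2_eq_square algebra_simps)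
    have hx: "h x \<le> h x0 + t * K" if x: "norm x \<le> 1" for x
    proof -
      define xt where "xt = x0 + t *\<^sub>R (x - x0)"
      have xt_eq: "xt = (1 - t) *\<^sub>R x0 + t *\<^sub>R x" by (simp add: xt_def algebra_simps)
      have "norm xt \<le> norm ((1 - t) *\<^sub>R x0) + norm (t *\<^sub>R x)"
        unfolding xt_eq by (rule norm_triangle_ineq)
      also have "\<dots> = (1 - t) * norm x0 + t * norm x"
        using t by simp
      also have "\<dots> \<le> (1 - t) * 1 + t * 1"
        using t x x0 by (intro add_mono mult_left_mono) auto
      finally have nxt: "norm xt \<le> 1" by simp
      define b where "b i = g i (x - x0)" for i
      have dxt: "d xt = (\<Sum>i<N. (t * b i - a i)^2)"
        unfolding d_def a_def b_def xt_def
        apply (intro sum.cong refl)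
        apply (simp add: blinfun.add_right blinfun.scaleR_right blinfun.diff_right)
        by (rule arg_cong[where f="\<lambda>v. v^2"]) (simp add: algebra_simps)
      also have "\<dots> = (\<Sum>i<N. (a i)^2 - 2 * t * (a i * b i) + t^2 * (b i)^2)"
        by (intro sum.cong refl) (simp add: power2_eq_square algebra_simps)
      also have "\<dots> = (\<Sum>i<N. (a i)^2) - 2 * t * (\<Sum>i<N. a i * b i) + t^2 * (\<Sum>i<N. (b i)^2)"
        by (simp only: sum.distrib sum_subtractf sum_distrib_left)
      finally have dxt': "d xt = (\<Sum>i<N. (a i)^2) - 2 * t * (\<Sum>i<N. a i * b i) + t^2 * (\<Sum>i<N. (b i)^2)" .
      have "\<delta> \<le> d xt" using low[OF nxt] .
      with x0(2) dx0 dxt' have "2 * t * (\<Sum>i<N. a i * b i) < t^2 * (1 + (\<Sum>i<N. (b i)^2))"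
        unfolding distrib_left mult_1_right by linarith
      then have ab: "(\<Sum>i<N. a i * b i) < t * (1 + (\<Sum>i<N. (b i)^2)) / 2"
        using t by (intro aux_div) auto
      have bb: "(\<Sum>i<N. (b i)^2) \<le> G2"
        unfolding G2_def
      proof (rule sum_mono)
        fix i
        have "\<bar>b i\<bar> \<le> norm (g i) * norm (x - x0)"
          unfolding b_def using norm_blinfun[of "g i" "x - x0"] by simp
        also have "\<dots> \<le> norm (g i) * 2"
          using x x0 by (intro mult_left_mono) (auto intro: order_trans[OF norm_triangle_ineq4])
        finally have bi: "\<bar>b i\<bar> \<le> 2 * norm (g i)" by simp
        show "(b i)^2 \<le> (2 * norm (g i))^2"
          using power_mono[OF bi abs_ge_zero, of 2] by simp
      qed
      have "h x - h x0 = (\<Sum>i<N. a i * g i x - a i * g i x0)"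
        by (simp add: h_apply sum_subtractf)
      also have "\<dots> = (\<Sum>i<N. a i * b i)"
        by (intro sum.cong refl) (simp add: b_def blinfun.diff_right right_diff_distrib)
      also have "\<dots> < t * K"
      proof -
        have "t * (1 + (\<Sum>i<N. (b i)^2)) \<le> t * (1 + G2)"
          using bb t by (intro mult_left_mono) auto
        then show ?thesis using ab unfolding K_def by simp
      qed
      finally show ?thesis by simp
    qed
    define B where "B = h x0 + t * K"
    have B0: "0 \<le> B" using hx[of 0] by (simp add: B_def)
    have "norm h \<le> B"
    proof (rule norm_blinfun_bound[OF B0])
      fix u :: 'a
      show "norm (h u) \<le> B * norm u"
      proof (cases "u = 0")
        case True then show ?thesis by simp
      next
        case False
        define w where "w = (1 / norm u) *\<^sub>R u"
        have nw: "norm w \<le> 1" "norm (- w) \<le> 1" using False by (auto simp: w_def)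
        have "h w \<le> B" "h (- w) \<le> B" using hx[OF nw(1)] hx[OF nw(2)] by (auto simp: B_def)
        then have "\<bar>h w\<bar> \<le> B" by (simp add: blinfun.minus_right)
        moreover have "h w = h u / norm u" by (simp add: w_def blinfun.scaleR_right)
        ultimately have "\<bar>h u\<bar> / norm u \<le> B" by simp
        then show ?thesis using False by (simp add: field_simps)
      qed
    qed
    moreover have "\<phi> h = (\<Sum>i<N. a i * c i)"
      unfolding h_def c_def using lin by (simp add: linear_sum linear_scale)
    ultimately have "(\<Sum>i<N. a i * c i) \<le> h x0 + t * K"
      using bd[of h] by (simp add: B_def)
    then have "(\<Sum>i<N. a i * c i) - (\<Sum>i<N. a i * g i x0) \<le> t * K"
      by (simp add: h_apply)
    moreover have "(\<Sum>i<N. a i * c i) - (\<Sum>i<N. a i * g i x0) = (\<Sum>i<N. (a i)^2)"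
    proof -
      have "(\<Sum>i<N. a i * c i) - (\<Sum>i<N. a i * g i x0) = (\<Sum>i<N. a i * c i - a i * g i x0)"
        by (simp add: sum_subtractf)
      also have "\<dots> = (\<Sum>i<N. (a i)^2)"
        by (intro sum.cong refl) (simp add: a_def power2_eq_square right_diff_distrib)
      finally show ?thesis .
    qed
    ultimately have "d x0 \<le> t * K" using dx0 by simp
    then show ?thesis using low[OF x0(1)] by simp
  qed
  have "\<delta> \<le> 0"
  proof (rule ccontr)
    assume "\<not> \<delta> \<le> 0"
    then have dp: "\<delta> > 0" by simp
    define t where "t = min 1 (\<delta> / (2 * K))"
    have "0 < t" "t \<le> 1" using dp Kpos by (auto simp: t_def)
    then have "\<delta> \<le> t * K" by (rule key)
    also have "\<dots> \<le> \<delta> / (2 * K) * K" using Kpos by (intro mult_right_mono) (auto simp: t_def)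
    also have "\<dots> = \<delta> / 2" using Kpos by simp
    finally show False using dp by simp
  qed
  moreover have "0 < \<epsilon>^2" using eps by simp
  ultimately have lt: "Inf S < \<epsilon>^2" unfolding \<delta>_def by linarith
  obtain x where x: "norm x \<le> 1" "d x < \<epsilon>^2"
    using cInf_lessD[OF Sne lt] unfolding S_def by auto
  have "\<bar>g i x - \<phi> (g i)\<bar> < \<epsilon>" if "i < N" for i
  proof -
    have "(g i x - c i)^2 \<le> d x"
      unfolding d_def using that by (intro member_le_sum) auto
    then have "\<bar>g i x - c i\<bar>^2 < \<epsilon>^2" using x by simp
    then show ?thesis using eps by (simp add: c_def power2_less_imp_less)
  qed
  then show ?thesis using x by blast
qed

lemma R_c0:
  assumes "(\<lambda>n. blinfun_apply (z n) x) \<longlonglongrightarrow> (0::real)"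
  shows "Bcontfun (\<lambda>n. blinfun_apply (z n) x) \<in> c0"
  using assms by (simp add: mem_c0 apply_Bcontfun_seq)

lemma aux_contra:
  fixes a b d :: real
  shows "b < d / 2 \<Longrightarrow> d \<le> a + b \<Longrightarrow> a < d / 2 \<Longrightarrow> False"
  by linarith

lemma dir2:
  fixes z :: "nat \<Rightarrow> ('a::banach \<Rightarrow>\<^sub>L real)"
  assumes ws: "\<And>x. (\<lambda>n. z n x) \<longlonglongrightarrow> 0"
    and rwc: "rel_weakly_compact c0 ((\<lambda>x. Bcontfun (\<lambda>n. z n x)) ` cball 0 1)"
  shows "weakly_null_dual z"
  unfolding weakly_null_dual_def
proof
  fix \<psi> :: "('a \<Rightarrow>\<^sub>L real) \<Rightarrow>\<^sub>L real"
  let ?W = "weak_topology_on c0"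
  define R where "R x = Bcontfun (\<lambda>n. z n x)" for x
  have Rapp: "apply_bcontfun (R x) = (\<lambda>n. z n x)" for x
    unfolding R_def by (rule apply_Bcontfun_seq[OF ws])
  have Rc0: "R x \<in> c0" for x unfolding R_def by (rule R_c0[OF ws])
  define M where "M = norm \<psi> + 1"
  have Mpos: "M > 0" by (simp add: M_def add_nonneg_pos)
  define \<phi> where "\<phi> g = \<psi> g / M" for g
  have lin: "linear \<phi>"
    unfolding \<phi>_def
    by (intro linearI) (auto simp: blinfun.add_right blinfun.scaleR_right add_divide_distrib)
  have bd: "\<phi> h \<le> norm h" for h
  proof -
    have "\<psi> h \<le> norm \<psi> * norm h" using norm_blinfun[of \<psi> h] by simp
    also have "\<dots> \<le> M * norm h" by (intro mult_right_mono) (auto simp: M_def)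
    finally show ?thesis using Mpos by (simp add: \<phi>_def divide_le_eq mult.commute)
  qed
  have ex: "\<forall>N. \<exists>x. norm x \<le> 1 \<and> (\<forall>i<N. \<bar>z i x - \<phi> (z i)\<bar> < 1 / (real N + 1))"
    using helly[OF lin bd] by simp
  obtain xs where xsA: "\<forall>N. norm (xs N) \<le> 1 \<and> (\<forall>i<N. \<bar>z i (xs N) - \<phi> (z i)\<bar> < 1 / (real N + 1))"
    using choice[OF ex] by blast
  have xs: "\<And>N. norm (xs N) \<le> 1"
    "\<And>N i. i < N \<Longrightarrow> \<bar>z i (xs N) - \<phi> (z i)\<bar> < 1 / (real N + 1)"
    using xsA by auto
  define y where "y N = R (xs N)" for N
  define K where "K = R ` cball 0 1"
  have yK: "y N \<in> K" for N unfolding y_def K_def by (rule imageI) (simp add: xs(1))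
  have Kc: "compactin ?W (?W closure_of K)"
  proof -
    have "K = (\<lambda>x. Bcontfun (\<lambda>n. z n x)) ` cball 0 1" by (simp add: K_def R_def)
    then show ?thesis using rwc by (simp add: rel_weakly_compact_def)
  qed
  define Cm where "Cm m = ?W closure_of (y ` {m..})" for m
  have ytop: "y ` {m..} \<subseteq> topspace ?W" for m
    unfolding topspace_W y_def using Rc0 by blast
  have "(?W closure_of K) \<inter> \<Inter>(range Cm) \<noteq> {}"
  proof -
    note fip = compactin_fip[THEN iffD1, OF Kc, THEN conjunct2, rule_format]
    have cl: "\<forall>C\<in>range Cm. closedin ?W C" by (simp add: Cm_def)
    have fin: "\<forall>\<F>. finite \<F> \<and> \<F> \<subseteq> range Cm \<longrightarrow> (?W closure_of K) \<inter> \<Inter>\<F> \<noteq> {}"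
    proof (intro allI impI, elim conjE)
      fix \<F> assume F: "finite \<F>" "\<F> \<subseteq> range Cm"
      show "(?W closure_of K) \<inter> \<Inter>\<F> \<noteq> {}"
      proof -
      obtain I where I: "finite I" "\<F> = Cm ` I"
        using finite_subset_image[OF F] by auto
      define m where "m = Max (insert 0 I)"
      have "y m \<in> Cm i" if "i \<in> I" for i
      proof -
        have "i \<le> m" using that I(1) by (simp add: m_def)
        then have "y m \<in> y ` {i..}" by auto
        then show ?thesis using closure_of_subset[OF ytop[of i]] by (auto simp: Cm_def)
      qed
      moreover have "K \<subseteq> topspace ?W" by (auto simp: topspace_W K_def Rc0)
      then have "y m \<in> ?W closure_of K"
        using closure_of_subset[of K ?W] yK[of m] by blast
      ultimately show ?thesis using I(2) by blast
    qed
    qed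
    show ?thesis by (rule fip) (use cl fin in blast)+
  qed
  then obtain c where c: "c \<in> ?W closure_of K" "\<And>m. c \<in> Cm m" by blast
  have cc0: "c \<in> c0" using c(1) closure_of_subset_topspace[of ?W K] topspace_W by blast
  have ceq: "apply_bcontfun c n = \<phi> (z n)" for n
  proof (rule ccontr)
    assume ne: "apply_bcontfun c n \<noteq> \<phi> (z n)"
    define e where "e = \<bar>apply_bcontfun c n - \<phi> (z n)\<bar> / 2"
    have epos: "e > 0" using ne unfolding e_def by simp
    obtain k :: nat where k: "k > 0" "inverse (real k) < e"
      using ex_inverse_of_nat_less[OF epos] by blast
    define m where "m = max (Suc n) k"
    let ?T = "{w \<in> c0. apply_bcontfun w n \<in> ball (apply_bcontfun c n) e}"
    have opT: "openin ?W ?T" by (rule openin_W[OF coord_dual]) simp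
    have cT: "c \<in> ?T" using cc0 epos by simp
    have cl: "\<forall>T. c \<in> T \<and> openin ?W T \<longrightarrow> (\<exists>u. u \<in> y ` {m..} \<and> u \<in> T)"
      using c(2)[of m] unfolding Cm_def in_closure_of by (rule conjunct2)
    obtain y' where y': "y' \<in> y ` {m..}" "y' \<in> ?T"
      using cl[rule_format, OF conjI[OF cT opT]] by (elim exE conjE)
    obtain N where N: "N \<ge> m" "y' = y N" using y'(1) by (elim imageE) simp
    have "dist (apply_bcontfun c n) (apply_bcontfun (y N) n) < e"
      using y'(2) unfolding N(2) by simp
    then have N2: "\<bar>apply_bcontfun c n - z n (xs N)\<bar> < e"
      by (simp add: y_def Rapp dist_real_def)
    have "n < N" using N(1) unfolding m_def by simp
    then have "\<bar>z n (xs N) - \<phi> (z n)\<bar> < 1 / (real N + 1)" by (rule xs(2))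
    also have "\<dots> \<le> 1 / real k"
    proof (rule divide_left_mono)
      show "real k \<le> real N + 1" using N(1) unfolding m_def by simp
      show "0 < (real N + 1) * real k" using k(1) by simp
    qed simp
    also have "\<dots> < e" using k(2) by (simp add: inverse_eq_divide)
    finally have "\<bar>z n (xs N) - \<phi> (z n)\<bar> < e" .
    moreover have "\<bar>apply_bcontfun c n - \<phi> (z n)\<bar> \<le> \<bar>apply_bcontfun c n - z n (xs N)\<bar> + \<bar>z n (xs N) - \<phi> (z n)\<bar>"
      using abs_triangle_ineq[of "apply_bcontfun c n - z n (xs N)" "z n (xs N) - \<phi> (z n)"] by simp
    ultimately show False using N2 unfolding e_def by (rule aux_contra)
  qed
  have "(\<lambda>n. \<phi> (z n)) \<longlonglongrightarrow> 0"
    using cc0 by (simp add: mem_c0 ceq[symmetric])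
  then have "(\<lambda>n. M * \<phi> (z n)) \<longlonglongrightarrow> 0" by (rule tendsto_mult_right_zero)
  then show "(\<lambda>n. blinfun_apply \<psi> (z n)) \<longlonglongrightarrow> 0"
    using Mpos by (simp add: \<phi>_def)
qed

lemma dir1:
  fixes z :: "nat \<Rightarrow> ('a::banach \<Rightarrow>\<^sub>L real)"
  assumes ws: "\<And>x. (\<lambda>n. z n x) \<longlonglongrightarrow> 0"
    and wn: "weakly_null_dual z"
    and A: "bounded A"
  shows "rel_weakly_compact c0 ((\<lambda>x. Bcontfun (\<lambda>n. z n x)) ` A)"
proof -
  let ?W = "weak_topology_on c0"
  let ?PT = "product_topology (\<lambda>_. euclideanreal) (UNIV :: ('a \<Rightarrow>\<^sub>L real) set)"
  obtain r where r: "r > 0" "\<And>x. x \<in> A \<Longrightarrow> norm x \<le> r"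
    using A by (auto simp: bounded_pos)
  have "\<exists>B. \<forall>n. \<bar>z n x\<bar> \<le> B" for x
  proof -
    have "Bseq (\<lambda>n. z n x)" using ws[of x] by (intro convergent_imp_Bseq convergentI)
    then show ?thesis by (auto simp: Bseq_def)
  qed
  then obtain C where C: "\<And>n. norm (z n) \<le> C" using unif_bound by blast
  define Box where "Box = PiE UNIV (\<lambda>g::'a \<Rightarrow>\<^sub>L real. {- (r * norm g) .. r * norm g})"
  define L1 where "L1 = (\<lambda>(g, h). {\<psi> \<in> topspace ?PT. \<psi> (g + h) = \<psi> g + \<psi> h}) ` UNIV"
  define L2 where "L2 = (\<lambda>(c, g). {\<psi> \<in> topspace ?PT. \<psi> (c *\<^sub>R g) = c * \<psi> g}) ` UNIV"
  define D where "D = Box \<inter> \<Inter>L1 \<inter> \<Inter>L2"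
  have Dchar: "\<psi> \<in> D \<longleftrightarrow> \<psi> \<in> Box \<and> (\<forall>g h. \<psi> (g + h) = \<psi> g + \<psi> h) \<and> (\<forall>c g. \<psi> (c *\<^sub>R g) = c * \<psi> g)" for \<psi>
    by (auto simp: D_def L1_def L2_def)
  have Boxc: "compactin ?PT Box"
    unfolding Box_def by (subst compactin_PiE) simp
  have L1c: "closedin ?PT (\<Inter>L1)"
  proof (rule closedin_Inter)
    show "L1 \<noteq> {}" by (simp add: L1_def)
    fix S assume "S \<in> L1"
    then obtain g h where S: "S = {\<psi> \<in> topspace ?PT. \<psi> (g + h) = \<psi> g + \<psi> h}"
      by (auto simp: L1_def)
    have "S = {\<psi> \<in> topspace ?PT. \<psi> (g + h) - \<psi> g - \<psi> h \<in> {0}}" by (auto simp: S)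
    also have "closedin ?PT \<dots>"
      by (intro closedin_continuous_map_preimage[where Y=euclideanreal] continuous_intros) auto
    finally show "closedin ?PT S" .
  qed
  have L2c: "closedin ?PT (\<Inter>L2)"
  proof (rule closedin_Inter)
    show "L2 \<noteq> {}" by (simp add: L2_def)
    fix S assume "S \<in> L2"
    then obtain c g where S: "S = {\<psi> \<in> topspace ?PT. \<psi> (c *\<^sub>R g) = c * \<psi> g}"
      by (auto simp: L2_def)
    have "S = {\<psi> \<in> topspace ?PT. \<psi> (c *\<^sub>R g) - c * \<psi> g \<in> {0}}" by (auto simp: S)
    also have "closedin ?PT \<dots>"
      by (intro closedin_continuous_map_preimage[where Y=euclideanreal] continuous_intros) auto
    finally show "closedin ?PT S" .
  qed
  have Dcl: "closedin ?PT D"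
    unfolding D_def using compactin_imp_closedin_gen Boxc
    by (intro closedin_Int L1c L2c) (simp add: compactin_imp_closedin Hausdorff_space_product_topology)
  have Dc: "compactin ?PT D"
    by (rule closed_compactin[OF Boxc _ Dcl]) (auto simp: D_def)
  have Dtop: "D \<subseteq> topspace ?PT" using Dc compactin_subset_topspace by blast
  have Dbl: "bounded_linear \<psi>" if "\<psi> \<in> D" for \<psi>
  proof -
    have *: "\<psi> \<in> Box" "\<And>g h. \<psi> (g + h) = \<psi> g + \<psi> h" "\<And>c g. \<psi> (c *\<^sub>R g) = c * \<psi> g"
      using that by (auto simp: Dchar)
    have "norm (\<psi> g) \<le> norm g * r" for g
    proof -
      have "\<forall>i. - (r * norm i) \<le> \<psi> i \<and> \<psi> i \<le> r * norm i"
        using *(1) by (simp add: Box_def PiE_iff)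
      then have "- (r * norm g) \<le> \<psi> g \<and> \<psi> g \<le> r * norm g" by blast
      then have "\<bar>\<psi> g\<bar> \<le> r * norm g" unfolding abs_le_iff by linarith
      then show ?thesis by (simp add: mult.commute)
    qed
    then show ?thesis using * by (intro bounded_linear_intro) auto
  qed
  have Dnull: "(\<lambda>n. \<psi> (z n)) \<longlonglongrightarrow> 0" if "\<psi> \<in> D" for \<psi>
  proof -
    have "(\<lambda>n. blinfun_apply (Blinfun \<psi>) (z n)) \<longlonglongrightarrow> 0"
      using wn unfolding weakly_null_dual_def by blast
    then show ?thesis using Dbl[OF that] by (simp add: bounded_linear_Blinfun_apply)
  qed
  define Psi where "Psi \<psi> = Bcontfun (\<lambda>n. \<psi> (z n))" for \<psi> :: "('a \<Rightarrow>\<^sub>L real) \<Rightarrow> real"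
  have Psi_app: "apply_bcontfun (Psi \<psi>) = (\<lambda>n. \<psi> (z n))" if "\<psi> \<in> D" for \<psi>
    unfolding Psi_def by (rule apply_Bcontfun_seq[OF Dnull[OF that]])
  have Psi_c0: "Psi \<psi> \<in> c0" if "\<psi> \<in> D" for \<psi>
    using Psi_app[OF that] Dnull[OF that] by (simp add: mem_c0)
  have UnS: "\<Union>{{x \<in> c0. f x \<in> U} | f U. f \<in> dual_on c0 \<and> open U} = c0"
    using topspace_W unfolding weak_topology_on_def topology_generated_by_topspace .
  have Psi_cont: "continuous_map (subtopology ?PT D) ?W Psi"
    unfolding weak_topology_on_def
  proof (rule continuous_on_generated_topo)
    show "Psi ` topspace (subtopology ?PT D) \<subseteq> \<Union>{{x \<in> c0. f x \<in> U} | f U. f \<in> dual_on c0 \<and> open U}"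
      unfolding UnS using Psi_c0 by auto
    fix U assume "U \<in> {{x \<in> c0. f x \<in> U} | f U. f \<in> dual_on c0 \<and> open U}"
    then obtain f V where U: "U = {x \<in> c0. f x \<in> V}" and f: "f \<in> dual_on c0" and V: "open V"
      by blast
    define a where "a n = f (ev n)" for n
    have suma: "summable (\<lambda>n. \<bar>a n\<bar>)" using dual_on_l1(1)[OF f] by (simp add: a_def)
    have sumaz: "summable (\<lambda>n. a n *\<^sub>R z n)"
    proof (rule summable_norm_cancel, rule summable_comparison_test'[where N=0])
      show "summable (\<lambda>n. \<bar>a n\<bar> * C)" using suma by (rule summable_mult2)
      fix n show "norm (norm (a n *\<^sub>R z n)) \<le> \<bar>a n\<bar> * C"
        using C[of n] by (simp add: mult_left_mono)
    qed
    define G where "G = (\<Sum>n. a n *\<^sub>R z n)"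
    have fPsi: "f (Psi \<psi>) = \<psi> G" if "\<psi> \<in> D" for \<psi>
    proof -
      have "(\<lambda>n. a n * \<psi> (z n)) sums f (Psi \<psi>)"
        using dual_on_l1(2)[OF f Psi_c0[OF that]] by (simp add: a_def Psi_app[OF that])
      moreover have "\<psi> G = (\<Sum>n. \<psi> (a n *\<^sub>R z n))"
        unfolding G_def by (rule bounded_linear.suminf[OF Dbl[OF that] sumaz])
      moreover have "\<psi> (a n *\<^sub>R z n) = a n * \<psi> (z n)" for n
        using that by (simp add: Dchar)
      ultimately show ?thesis by (simp add: sums_iff)
    qed
    have eq: "Psi -` U \<inter> topspace (subtopology ?PT D) = {\<psi> \<in> topspace (subtopology ?PT D). \<psi> G \<in> V}"
      using Dtop by (auto simp: U Psi_c0 fPsi)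
    have cont: "continuous_map (subtopology ?PT D) euclideanreal (\<lambda>\<psi>. \<psi> G)"
      by (intro continuous_map_from_subtopology continuous_map_product_projection) simp
    have oV: "openin euclideanreal V" using V by simp
    show "openin (subtopology ?PT D) (Psi -` U \<inter> topspace (subtopology ?PT D))"
      unfolding eq by (rule openin_continuous_map_preimage[OF cont oV])
  qed
  have PsiDc: "compactin ?W (Psi ` D)"
    by (rule image_compactin[OF _ Psi_cont]) (simp add: compactin_subtopology Dc)
  have PsiDcl: "closedin ?W (Psi ` D)"
    by (rule compactin_imp_closedin[OF Hausdorff_W PsiDc])
  have sub: "(\<lambda>x. Bcontfun (\<lambda>n. z n x)) ` A \<subseteq> Psi ` D"
  proof
    fix y assume "y \<in> (\<lambda>x. Bcontfun (\<lambda>n. z n x)) ` A"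
    then obtain x where x: "x \<in> A" "y = Bcontfun (\<lambda>n. z n x)" by blast
    have "(\<lambda>g. blinfun_apply g x) \<in> D"
    proof -
      have ab: "\<bar>g x\<bar> \<le> r * norm g" for g :: "'a \<Rightarrow>\<^sub>L real"
      proof -
        have "\<bar>g x\<bar> \<le> norm g * norm x" using norm_blinfun[of g x] by simp
        also have "\<dots> \<le> norm g * r" using r(2)[OF x(1)] by (simp add: mult_left_mono)
        finally show ?thesis by (simp add: mult.commute)
      qed
      have bx: "- (r * norm g) \<le> g x \<and> g x \<le> r * norm g" for g :: "'a \<Rightarrow>\<^sub>L real"
        using ab[of g] unfolding abs_le_iff by linarith
      then have "(\<lambda>g. blinfun_apply g x) \<in> Box" by (simp add: Box_def PiE_iff)
      then show ?thesis by (simp add: Dchar blinfun.add_left blinfun.scaleR_left)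
    qed
    moreover have "y = Psi (\<lambda>g. blinfun_apply g x)" by (simp add: x(2) Psi_def)
    ultimately show "y \<in> Psi ` D" by blast
  qed
  have "?W closure_of ((\<lambda>x. Bcontfun (\<lambda>n. z n x)) ` A) \<subseteq> Psi ` D"
    by (rule closure_of_minimal[OF sub PsiDcl])
  then show ?thesis
    unfolding rel_weakly_compact_def
    by (intro closed_compactin[OF PsiDc]) auto
qed

theorem mainTheorem3:
  fixes T :: "'a::banach \<Rightarrow>\<^sub>L 'b::banach_lattice"
  shows "(almost_grothendieck_op T
            \<longleftrightarrow> (\<forall>ys. disjoint_operator_seq ys
                   \<longrightarrow> weakly_compact_op_c0 (seq_op ys \<circ> blinfun_apply T)))
       \<and> (almost_grothendieck_op T
            \<longleftrightarrow> (\<forall>A. bounded A \<longrightarrow> almost_grothendieck_set (blinfun_apply T ` A)))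
       \<and> (almost_grothendieck_op T
            \<longleftrightarrow> almost_grothendieck_set (blinfun_apply T ` cball 0 1))"
proof -
  have img: "seq_op ys ` (blinfun_apply T ` S) = (\<lambda>x. Bcontfun (\<lambda>n. blinfun_apply (ys n o\<^sub>L T) x)) ` S"
    for ys :: "nat \<Rightarrow> ('b \<Rightarrow>\<^sub>L real)" and S
    by (auto simp: seq_op_def image_iff)
  have wsz: "(\<lambda>n. blinfun_apply (ys n o\<^sub>L T) x) \<longlonglongrightarrow> 0" if "weak_star_null ys" for ys :: "nat \<Rightarrow> ('b \<Rightarrow>\<^sub>L real)" and x
    using that by (simp add: weak_star_null_def)
  let ?P1 = "almost_grothendieck_op T"
  let ?P2 = "\<forall>ys. disjoint_operator_seq ys \<longrightarrow> weakly_compact_op_c0 (seq_op ys \<circ> blinfun_apply T)"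
  let ?P3 = "\<forall>A. bounded A \<longrightarrow> almost_grothendieck_set (blinfun_apply T ` A)"
  let ?P4 = "almost_grothendieck_set (blinfun_apply T ` cball 0 1)"
  have P24: "?P2 \<longleftrightarrow> ?P4"
    unfolding weakly_compact_op_c0_def almost_grothendieck_set_def image_comp[symmetric] by simp
  have P13: "?P1 \<Longrightarrow> ?P3"
  proof (intro allI impI)
    fix A :: "'a set" assume P1: ?P1 and A: "bounded A"
    show "almost_grothendieck_set (blinfun_apply T ` A)"
      unfolding almost_grothendieck_set_def
    proof (intro allI impI)
      fix ys :: "nat \<Rightarrow> ('b \<Rightarrow>\<^sub>L real)" assume ys: "disjoint_operator_seq ys"
      have wn: "weakly_null_dual (\<lambda>n. ys n o\<^sub>L T)"
        using ys P1 by (auto simp: almost_grothendieck_op_def disjoint_operator_seq_def)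
      have wx: "\<And>x. (\<lambda>n. blinfun_apply (ys n o\<^sub>L T) x) \<longlonglongrightarrow> 0"
        using ys wsz by (auto simp: disjoint_operator_seq_def)
      show "rel_weakly_compact c0 (seq_op ys ` blinfun_apply T ` A)"
        unfolding img by (rule dir1[OF wx wn A])
    qed
  qed
  have P34: "?P3 \<Longrightarrow> ?P4" by simp
  have P41: "?P4 \<Longrightarrow> ?P1"
    unfolding almost_grothendieck_op_def
  proof (intro allI impI)
    fix ys :: "nat \<Rightarrow> ('b \<Rightarrow>\<^sub>L real)"
    assume P4: ?P4 and ys: "weak_star_null ys \<and> disjoint_seq ys"
    then have "rel_weakly_compact c0 (seq_op ys ` blinfun_apply T ` cball 0 1)"
      by (auto simp: almost_grothendieck_set_def disjoint_operator_seq_def)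
    then have "rel_weakly_compact c0 ((\<lambda>x. Bcontfun (\<lambda>n. blinfun_apply (ys n o\<^sub>L T) x)) ` cball 0 1)"
      by (simp only: img)
    moreover have "\<And>x. (\<lambda>n. blinfun_apply (ys n o\<^sub>L T) x) \<longlonglongrightarrow> 0"
      using ys wsz by auto
    ultimately show "weakly_null_dual (\<lambda>n. ys n o\<^sub>L T)"
      by (intro dir2)
  qed
  show ?thesis using P24 P13 P34 P41 by blast
qed


end
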